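(* Let $X$ be a $k$-variety and $\alpha:\mathbb{G}_a\times X\dashrightarrow X$ a nontrivial rational $\mathbb{G}_a$-action with co-action $\alpha^*:K_X\to K_X(t)$, and let $K_0=K_X^{\mathbb{G}_a}=\{h\in K_X:\alpha^*h=h\}$. Then there exists $s\in K_X$, transcendental over $K_0$, such that $\alpha^*(s)=s+t$ and $K_X=K_0(s)$; consequently $\alpha^*(f(s))=f(s+t)$ for every $f(s)\in K_0(s)=K_X$.
   Context: $k$ is a field of characteristic zero; a $k$-variety is a separated geometrically integral scheme of finite type over $k$, with function field $K_X$; $\mathbb{G}_a=\mathrm{Spec}(k[t])$. A rational $\mathbb{G}_a$-action on $X$ is given by a homomorphism of $k$-fields $\alpha^*:K_X\to K_X(t)$ with image in $\mathcal{O}_{\nu_0}=\{r(t)\in K_X(t):\mathrm{ord}_{t=0}r\ge 0\}$, such that $(\alpha^*\otimes\mathrm{id})\circ\alpha^*$ equals $\alpha^*$ followed by $t\mapsto t+t'$ (as maps $K_X\to K_X(t,t')$, where $\alpha^*\otimes \mathrm{id}$ applies $\alpha^*$ to coefficients of $K_X(t')$ and sends the new variable to $t$), and such that reduction of $\alpha^*$ modulo $t$ is the identity of $K_X$. The action is nontrivial if $\alpha^*\neq$ the inclusion $K_X\subset K_X(t)$. *)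

theory Defs
  imports "HOL-Computational_Algebra.Polynomial" "HOL-Computational_Algebra.Fraction_Field"
begin

(* The function field K_X is modelled as a type 'a :: field_char_0, the base field k
   as a subset of it.  K_X(t) is  'a poly fract  (variable t), and
   K_X(t,t') is  ('a poly fract) poly fract  = K_X(t)(t') (outer variable t'). *)

definition is_subfield :: "'a::field set \<Rightarrow> bool" where
  "is_subfield F \<longleftrightarrow> 0 \<in> F \<and> 1 \<in> F \<and>
     (\<forall>x\<in>F. \<forall>y\<in>F. x + y \<in> F \<and> x * y \<in> F) \<and>
     (\<forall>x\<in>F. - x \<in> F \<and> inverse x \<in> F)"

definition gen_field :: "'a::field set \<Rightarrow> 'a set" where
  "gen_field S = \<Inter> {F. is_subfield F \<and> S \<subseteq> F}"

definition algebraic_over :: "'a::field set \<Rightarrow> 'a \<Rightarrow> bool" where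
  "algebraic_over F x \<longleftrightarrow> (\<exists>p::'a poly. p \<noteq> 0 \<and> (\<forall>i. coeff p i \<in> F) \<and> poly p x = 0)"

(* K finitely generated as a field over k, and k algebraically closed in K
   (= K is the function field of a geometrically integral k-variety, char 0). *)
definition function_field_over :: "'a::field set \<Rightarrow> bool" where
  "function_field_over k \<longleftrightarrow> is_subfield k \<and>
     (\<exists>S. finite S \<and> gen_field (k \<union> S) = UNIV) \<and>
     (\<forall>x. algebraic_over k x \<longrightarrow> x \<in> k)"

definition cst :: "'a::field \<Rightarrow> 'a poly fract" where
  "cst c = Fract [:c:] 1"

definition tvar :: "'a::field poly fract" where
  "tvar = Fract [:0, 1:] 1"

(* alpha applied to the coefficients of K(t'), new variable mapped to t:
   K(t') \<rightarrow> K(t)(t') *)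
definition lift_coact :: "('a::field \<Rightarrow> 'a poly fract) \<Rightarrow> 'a poly fract \<Rightarrow> 'a poly fract poly fract" where
  "lift_coact \<alpha> r = (SOME x. \<exists>p q. q \<noteq> 0 \<and> r = Fract p q \<and>
       x = Fract (map_poly \<alpha> p) (map_poly \<alpha> q))"

(* substitution t \<mapsto> t + t' :  K(t) \<rightarrow> K(t)(t') *)
definition shift_pol :: "'a::field poly \<Rightarrow> 'a poly fract poly" where
  "shift_pol p = pcompose (map_poly cst p) [:tvar, 1:]"

definition shift :: "'a::field poly fract \<Rightarrow> 'a poly fract poly fract" where
  "shift r = (SOME x. \<exists>p q. q \<noteq> 0 \<and> r = Fract p q \<and>
       x = Fract (shift_pol p) (shift_pol q))"

definition rational_Ga_action :: "'a::field set \<Rightarrow> ('a \<Rightarrow> 'a poly fract) \<Rightarrow> bool" where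
  "rational_Ga_action k \<alpha> \<longleftrightarrow>
     (\<forall>x y. \<alpha> (x + y) = \<alpha> x + \<alpha> y) \<and>
     (\<forall>x y. \<alpha> (x * y) = \<alpha> x * \<alpha> y) \<and>
     \<alpha> 1 = 1 \<and>
     (\<forall>c\<in>k. \<alpha> c = cst c) \<and>
     (\<comment> \<open>image in O_{nu_0} and reduction modulo t is the identity\<close>
      \<forall>h. \<exists>p q. \<alpha> h = Fract p q \<and> poly q 0 \<noteq> 0 \<and> poly p 0 = h * poly q 0) \<and>
     (\<forall>h. lift_coact \<alpha> (\<alpha> h) = shift (\<alpha> h))"

definition invariants :: "('a::field \<Rightarrow> 'a poly fract) \<Rightarrow> 'a set" where
  "invariants \<alpha> = {h. \<alpha> h = cst h}"

end

theory Submission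
  imports Defs "HOL-Computational_Algebra.Normalized_Fraction"
begin

locale rhom =
  fixes f :: "'a::comm_ring_1 \<Rightarrow> 'b::comm_ring_1"
  assumes hadd: "\<And>x y. f (x + y) = f x + f y"
    and hmult: "\<And>x y. f (x * y) = f x * f y"
    and hone: "f 1 = 1"
begin

lemma hzero[simp]: "f 0 = 0"
  using hadd[of 0 0] by simp

lemma huminus: "f (- x) = - f x"
proof -
  have "f x + f (-x) = 0" using hadd[of x "-x"] by simp
  from minus_unique[OF this] show ?thesis by simp
qed

lemma hdiff: "f (x - y) = f x - f y"
  using hadd[of x "-y"] huminus[of y] by simp

lemma hof_nat: "f (of_nat n) = of_nat n"
  by (induct n) (simp_all add: hadd hone)

lemma map_add: "map_poly f (p + q) = map_poly f p + map_poly f q"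
  by (intro poly_eqI) (simp add: coeff_map_poly hadd)

lemma map_smult: "map_poly f (smult c p) = smult (f c) (map_poly f p)"
  by (intro poly_eqI) (simp add: coeff_map_poly hmult)

lemma map_mult: "map_poly f (p * q) = map_poly f p * map_poly f q"
  by (induct p) (simp_all add: map_poly_pCons map_add map_smult)

lemma map_one: "map_poly f 1 = 1"
  by (simp add: hone)

lemma map_const: "map_poly f [:c:] = [:f c:]"
  by (simp add: map_poly_pCons)

lemma hpoly: "f (poly p x) = poly (map_poly f p) (f x)"
  by (induct p) (simp_all add: map_poly_pCons hadd hmult)

lemma map_pcompose: "map_poly f (pcompose p q) = pcompose (map_poly f p) (map_poly f q)"
  by (induct p) (simp_all add: pcompose_pCons map_poly_pCons map_add map_mult map_const)

end

locale fhom = rhom f for f :: "'a::field \<Rightarrow> 'b::field"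
begin

lemma hinj: "f x = 0 \<Longrightarrow> x = 0"
  by (metis hmult hone right_inverse mult_zero_left zero_neq_one)

lemma hinverse: "f (inverse x) = inverse (f x)"
proof (cases "x = 0")
  case False
  then have "f x * f (inverse x) = 1" by (metis hmult hone right_inverse)
  then show ?thesis by (metis inverse_unique)
qed simp

lemma hdivide: "f (x / y) = f x / f y"
  by (simp add: divide_inverse hmult hinverse)

lemma map_nz: "p \<noteq> 0 \<Longrightarrow> map_poly f p \<noteq> 0"
  by (metis hinj hzero map_poly_eq_0_iff)

lemma map_degree: "degree (map_poly f p) = degree p"
  using hinj by (intro degree_map_poly) blast

end


lemma ideal_gen:
  fixes P Q :: "'b::field poly"
  assumes "Q \<noteq> 0"
  shows "\<exists>g a b. g \<noteq> 0 \<and> g = a * P + b * Q \<and> g dvd P \<and> g dvd Q"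
proof -
  let ?I = "\<lambda>g. g \<noteq> 0 \<and> (\<exists>a b. g = a * P + b * Q)"
  have "Q = 0 * P + 1 * Q" by simp
  then have "?I Q" using assms by blast
  then have ex: "\<exists>n g. ?I g \<and> degree g = n" by blast
  define n where "n = (LEAST n. \<exists>g. ?I g \<and> degree g = n)"
  from LeastI_ex[OF ex] obtain g where g: "?I g" "degree g = n" unfolding n_def by blast
  have min: "degree g \<le> degree h" if "?I h" for h
  proof -
    have "n \<le> degree h" unfolding n_def by (rule Least_le) (use that in blast)
    then show ?thesis using g(2) by simp
  qed
  from g(1) obtain a b where ab: "g = a * P + b * Q" by blast
  have dv: "g dvd R" if R: "\<exists>c d. R = c * P + d * Q" for R
  proof (rule ccontr)
    assume nd: "\<not> g dvd R"
    then have nz: "R mod g \<noteq> 0" by (simp add: mod_eq_0_iff_dvd)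
    from R obtain c d where cd: "R = c * P + d * Q" by blast
    have "R mod g = R - (R div g) * g" by (simp add: minus_div_mult_eq_mod)
    also have "\<dots> = (c - (R div g) * a) * P + (d - (R div g) * b) * Q"
      by (simp add: cd ab algebra_simps)
    finally have "?I (R mod g)" using nz by blast
    from min[OF this] degree_mod_less'[OF g(1)[THEN conjunct1] nz] show False by simp
  qed
  have "P = 1 * P + 0 * Q" by simp
  then have "g dvd P" by (intro dv) blast
  moreover have "Q = 0 * P + 1 * Q" by simp
  then have "g dvd Q" by (intro dv) blast
  ultimately show ?thesis using g(1) ab by blast
qed

lemma bez_rep:
  fixes z :: "'b::field poly fract"
  shows "\<exists>P Q a b. z = Fract P Q \<and> Q \<noteq> 0 \<and> lead_coeff Q = 1 \<and> a * P + b * Q = 1"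
proof -
  let ?D = "\<lambda>Q. Q \<noteq> 0 \<and> (\<exists>P. z = Fract P Q)"
  have ex: "\<exists>n Q. ?D Q \<and> degree Q = n"
  proof -
    obtain P Q where "z = Fract P Q" "Q \<noteq> 0" by (cases z) auto
    then show ?thesis by blast
  qed
  define n where "n = (LEAST n. \<exists>Q. ?D Q \<and> degree Q = n)"
  from LeastI_ex[OF ex] obtain Q where Q: "?D Q" "degree Q = n" unfolding n_def by blast
  have min: "degree Q \<le> degree h" if "?D h" for h
  proof -
    have "n \<le> degree h" unfolding n_def by (rule Least_le) (use that in blast)
    then show ?thesis using Q(2) by simp
  qed
  from Q(1) obtain P where P: "z = Fract P Q" and Qnz: "Q \<noteq> 0" by blast
  from ideal_gen[OF Qnz, of P] obtain g a b where
    g: "g \<noteq> 0" "g = a * P + b * Q" "g dvd P" "g dvd Q" by blast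
  from g(3) obtain P1 where P1: "P = g * P1" by (elim dvdE)
  from g(4) obtain Q1 where Q1: "Q = g * Q1" by (elim dvdE)
  have Q1nz: "Q1 \<noteq> 0" using Qnz Q1 by auto
  have "z = Fract P1 Q1" using P P1 Q1 mult_fract_cancel[OF g(1)] by simp
  then have "degree Q \<le> degree Q1" using min Q1nz by blast
  moreover have "degree Q = degree g + degree Q1" using Q1 degree_mult_eq[OF g(1) Q1nz] by simp
  ultimately have "degree g = 0" by simp
  then obtain c where c: "g = [:c:]" by (elim degree_eq_zeroE)
  with g(1) have cnz: "c \<noteq> 0" by simp
  define l where "l = lead_coeff Q"
  have lnz: "l \<noteq> 0" using Qnz l_def by simp
  define P' where "P' = smult (inverse l) P"
  define Q' where "Q' = smult (inverse l) Q"
  have "z = Fract P' Q'"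
    using P mult_fract_cancel[of "[:inverse l:]" P Q] lnz
    by (simp add: P'_def Q'_def)
  moreover have "Q' \<noteq> 0" using Qnz lnz by (simp add: Q'_def)
  moreover have "lead_coeff Q' = 1" using lnz by (simp add: Q'_def l_def lead_coeff_smult)
  moreover have "smult (l / c) a * P' + smult (l / c) b * Q' = 1"
  proof -
    have "smult (l / c) a * P' + smult (l / c) b * Q' = smult (inverse c) (a * P + b * Q)"
    proof -
      have e: "inverse l * (l / c) = inverse c" using lnz by (simp add: field_simps)
      show ?thesis by (simp only: P'_def Q'_def mult_smult_left mult_smult_right smult_smult smult_add_right e)
    qed
    also have "a * P + b * Q = [:c:]" using g(2) c by simp
    also have "smult (inverse c) [:c:] = 1" using cnz by (simp add: one_pCons)
    finally show ?thesis .
  qed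
  ultimately show ?thesis by blast
qed


lemma some_fract:
  fixes \<phi> :: "'c::idom \<Rightarrow> 'd::idom"
  assumes mult: "\<And>x y. \<phi> (x * y) = \<phi> x * \<phi> y"
    and nz: "\<And>q. q \<noteq> 0 \<Longrightarrow> \<phi> q \<noteq> 0" and q0: "q0 \<noteq> 0"
  shows "(SOME x. \<exists>p q. q \<noteq> 0 \<and> Fract p0 q0 = Fract p q \<and> x = Fract (\<phi> p) (\<phi> q))
         = Fract (\<phi> p0) (\<phi> q0)"
proof -
  define S where "S = (SOME x. \<exists>p q. q \<noteq> 0 \<and> Fract p0 q0 = Fract p q \<and> x = Fract (\<phi> p) (\<phi> q))"
  have "\<exists>p q. q \<noteq> 0 \<and> Fract p0 q0 = Fract p q \<and> S = Fract (\<phi> p) (\<phi> q)"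
    unfolding S_def by (rule someI_ex) (use q0 in blast)
  then obtain p q where pq: "q \<noteq> 0" "Fract p0 q0 = Fract p q" "S = Fract (\<phi> p) (\<phi> q)" by blast
  from pq(2) have "p0 * q = p * q0" using eq_fract(1)[OF q0 pq(1)] by simp
  then have "\<phi> p0 * \<phi> q = \<phi> p * \<phi> q0" by (metis mult)
  then have "Fract (\<phi> p0) (\<phi> q0) = Fract (\<phi> p) (\<phi> q)"
    using eq_fract(1)[OF nz[OF q0] nz[OF pq(1)]] by simp
  then show ?thesis using pq(3) S_def by simp
qed

lemma cst_fhom: "fhom (cst :: 'a::field \<Rightarrow> 'a poly fract)"
proof
  fix x y :: 'a
  show "cst (x + y) = cst x + cst y" by (simp add: cst_def)
  show "cst (x * y) = cst x * cst y" by (simp add: cst_def mult.commute)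
  show "cst 1 = (1 :: 'a poly fract)" by (simp add: cst_def One_fract_def one_pCons)
qed

interpretation cst: fhom "cst :: 'a::field \<Rightarrow> 'a poly fract"
  by (rule cst_fhom)

lemma poly_cst_Fract:
  "poly (map_poly (cst :: 'a::field \<Rightarrow> _) p) (Fract r 1) = Fract (pcompose p r) 1"
proof (induct p)
  case 0
  then show ?case by (simp add: Zero_fract_def)
next
  case (pCons a p)
  then show ?case by (simp add: map_poly_pCons pcompose_pCons) (simp add: cst_def)
qed

lemma cst_tvar: "cst s + tvar = Fract [:s, 1:] 1"
  by (simp add: cst_def tvar_def)

lemma shift_pol_rhom: "rhom (shift_pol :: 'a::field poly \<Rightarrow> _)"
  by unfold_locales
    (simp_all add: shift_pol_def cst.map_add cst.map_mult pcompose_add pcompose_mult pcompose_1 cst.hone)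

interpretation sp: rhom "shift_pol :: 'a::field poly \<Rightarrow> _"
  by (rule shift_pol_rhom)

lemma shift_pol_nz: "p \<noteq> 0 \<Longrightarrow> shift_pol (p :: 'a::field poly) \<noteq> 0"
  unfolding shift_pol_def using pcompose_eq_0[of "map_poly cst p" "[:tvar, 1:]"] cst.map_nz
  by fastforce

lemma coeff_lin_mult:
  fixes r :: "'b::comm_ring_1 poly"
  shows
  "coeff (pCons c [:1:] * r) i = c * coeff r i + (case i of 0 \<Rightarrow> 0 | Suc j \<Rightarrow> coeff r j)"
  by (cases i) (simp_all add: coeff_pCons)

lemma coeff_shift_gen:
  fixes p :: "'b::comm_ring_1 poly"
  shows "coeff (pcompose p [:c, 1:]) (degree p) = lead_coeff p \<and>
    (\<forall>i > degree p. coeff (pcompose p [:c, 1:]) i = 0) \<and>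
    (degree p \<ge> 1 \<longrightarrow> coeff (pcompose p [:c, 1:]) (degree p - 1) =
        coeff p (degree p - 1) + of_nat (degree p) * c * lead_coeff p)"
proof (induct p)
  case 0
  then show ?case by simp
next
  case (pCons a p)
  show ?case
  proof (cases "p = 0")
    case True
    then show ?thesis by (auto simp: coeff_eq_0)
  next
    case False
    define d where "d = degree p"
    define r where "r = pcompose p [:c, 1:]"
    have deg: "degree (pCons a p) = Suc d" using False d_def by simp
    have comp: "pcompose (pCons a p) [:c, 1:] = [:a:] + pCons c [:1:] * r"
      by (simp add: pcompose_pCons r_def)
    have co: "coeff (pcompose (pCons a p) [:c, 1:]) i =
        (if i = 0 then a else 0) + (c * coeff r i + (case i of 0 \<Rightarrow> 0 | Suc j \<Rightarrow> coeff r j))" for i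
      unfolding comp coeff_add coeff_lin_mult by (simp add: coeff_pCons split: nat.split)
    from pCons(2) have IH1: "coeff r d = lead_coeff p" and IH2: "\<forall>i > d. coeff r i = 0"
      and IH3: "d \<ge> 1 \<longrightarrow> coeff r (d - 1) = coeff p (d - 1) + of_nat d * c * lead_coeff p"
      by (simp_all add: r_def d_def)
    have A: "coeff (pcompose (pCons a p) [:c, 1:]) (Suc d) = lead_coeff (pCons a p)"
      using co[of "Suc d"] IH1 IH2 deg d_def by simp
    have B: "\<forall>i > Suc d. coeff (pcompose (pCons a p) [:c, 1:]) i = 0"
    proof (intro allI impI)
      fix i assume i: "i > Suc d"
      then obtain j where j: "i = Suc j" "j > d" by (cases i) auto
      show "coeff (pcompose (pCons a p) [:c, 1:]) i = 0"
        using co[of i] IH2 i j by simp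
    qed
    have C: "coeff (pcompose (pCons a p) [:c, 1:]) d =
        coeff (pCons a p) d + of_nat (Suc d) * c * lead_coeff (pCons a p)"
    proof (cases d)
      case 0
      then show ?thesis using co[of 0] IH1 deg d_def by (simp add: algebra_simps)
    next
      case (Suc j)
      then show ?thesis using co[of d] IH1 IH3 deg d_def
        by (simp add: algebra_simps coeff_pCons)
    qed
    show ?thesis using A B C deg by simp
  qed
qed


locale gaction =
  fixes k :: "'a::field_char_0 set" and \<alpha> :: "'a \<Rightarrow> 'a poly fract"
  assumes act: "rational_Ga_action k \<alpha>"
begin

sublocale fhom \<alpha>
  using act unfolding rational_Ga_action_def by unfold_locales blast+

lemma red: "\<exists>p q. \<alpha> h = Fract p q \<and> poly q 0 \<noteq> 0 \<and> poly p 0 = h * poly q 0"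
  using act unfolding rational_Ga_action_def by blast

lemma coa: "lift_coact \<alpha> (\<alpha> h) = shift (\<alpha> h)"
  using act unfolding rational_Ga_action_def by blast

lemma lift_eval: "q \<noteq> 0 \<Longrightarrow> lift_coact \<alpha> (Fract p q) = Fract (map_poly \<alpha> p) (map_poly \<alpha> q)"
  unfolding lift_coact_def by (rule some_fract) (simp_all add: map_mult map_nz)

lemma shift_eval: "q \<noteq> 0 \<Longrightarrow> shift (Fract p q) = Fract (shift_pol p) (shift_pol q)"
  unfolding shift_def by (rule some_fract) (simp_all add: sp.hmult shift_pol_nz)

lemma degree_shift_pol: "degree (shift_pol p) = degree p"
  by (simp add: shift_pol_def degree_pcompose cst.map_degree)

lemma lead_shift_pol: "lead_coeff (shift_pol p) = cst (lead_coeff p)"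
proof -
  have "lead_coeff (shift_pol p) = lead_coeff (map_poly cst p) * lead_coeff [:tvar, 1:] ^ degree (map_poly cst p)"
    unfolding shift_pol_def by (rule lead_coeff_comp) simp
  also have "\<dots> = cst (lead_coeff p)"
    by (simp add: coeff_map_poly cst.map_degree)
  finally show ?thesis .
qed

lemma key:
  assumes rep: "\<alpha> h = Fract P Q" and Qnz: "Q \<noteq> 0" and l: "lead_coeff Q = 1"
    and bz: "a * P + b * Q = 1"
  shows "map_poly \<alpha> P = shift_pol P \<and> map_poly \<alpha> Q = shift_pol Q"
proof -
  have "Fract (map_poly \<alpha> P) (map_poly \<alpha> Q) = Fract (shift_pol P) (shift_pol Q)"
    using coa[of h] rep lift_eval[OF Qnz] shift_eval[OF Qnz] by simp
  then have E: "map_poly \<alpha> P * shift_pol Q = shift_pol P * map_poly \<alpha> Q"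
    using eq_fract(1)[OF map_nz[OF Qnz] shift_pol_nz[OF Qnz]] by simp
  have bz': "shift_pol a * shift_pol P + shift_pol b * shift_pol Q = 1"
    using bz by (metis sp.hadd sp.hmult sp.hone)
  have "map_poly \<alpha> Q = map_poly \<alpha> Q * (shift_pol a * shift_pol P + shift_pol b * shift_pol Q)"
    using bz' by simp
  also have "\<dots> = shift_pol a * (shift_pol P * map_poly \<alpha> Q) + shift_pol b * shift_pol Q * map_poly \<alpha> Q"
    by (simp add: algebra_simps)
  also have "\<dots> = shift_pol Q * (shift_pol a * map_poly \<alpha> P + shift_pol b * map_poly \<alpha> Q)"
    using E[symmetric] by (simp add: algebra_simps)
  finally obtain c where c: "map_poly \<alpha> Q = shift_pol Q * c" by blast
  have cnz: "c \<noteq> 0" using c map_nz[OF Qnz] by auto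
  have "degree Q = degree Q + degree c"
    using c degree_mult_eq[OF shift_pol_nz[OF Qnz] cnz] map_degree degree_shift_pol by metis
  then have "degree c = 0" by simp
  then obtain c0 where c0: "c = [:c0:]" by (elim degree_eq_zeroE)
  have "lead_coeff (map_poly \<alpha> Q) = 1" using l by (simp add: lead_coeff_map_poly_nz hone)
  moreover have "lead_coeff (shift_pol Q * c) = c0"
    using l c0 by (simp add: lead_coeff_mult lead_shift_pol cst.hone)
  ultimately have "c0 = 1" using c by simp
  then have Qeq: "map_poly \<alpha> Q = shift_pol Q" using c c0 by (simp add: one_pCons)
  with E have "map_poly \<alpha> P * shift_pol Q = shift_pol P * shift_pol Q" by simp
  then have "map_poly \<alpha> P = shift_pol P" using shift_pol_nz[OF Qnz] by simp
  with Qeq show ?thesis by simp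
qed

lemma evalz:
  assumes rep: "\<alpha> h = Fract P Q" and Qnz: "Q \<noteq> 0" and bz: "a * P + b * Q = 1"
  shows "poly Q 0 \<noteq> 0 \<and> poly P 0 = h * poly Q 0"
proof -
  obtain p q where pq: "\<alpha> h = Fract p q" "poly q 0 \<noteq> 0" "poly p 0 = h * poly q 0"
    using red by blast
  have qnz: "q \<noteq> 0" using pq(2) by auto
  have "Fract p q = Fract P Q" using pq(1) rep by simp
  then have E: "p * Q = P * q" using eq_fract(1)[OF qnz Qnz] by simp
  have "q = q * (a * P + b * Q)" using bz by simp
  also have "\<dots> = a * (P * q) + b * q * Q" by (simp add: algebra_simps)
  also have "\<dots> = Q * (a * p + b * q)" using E[symmetric] by (simp add: algebra_simps)
  finally have "poly q 0 = poly Q 0 * poly (a * p + b * q) 0" by (metis poly_mult)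
  then have Q0: "poly Q 0 \<noteq> 0" using pq(2) by auto
  have "poly p 0 * poly Q 0 = poly P 0 * poly q 0" using E by (metis poly_mult)
  then have "poly q 0 * (h * poly Q 0) = poly q 0 * poly P 0" using pq(3) by (simp add: algebra_simps)
  then have "h * poly Q 0 = poly P 0" using pq(2) by simp
  with Q0 show ?thesis by simp
qed

lemma slice_from:
  assumes E: "map_poly \<alpha> P = shift_pol P" and d: "degree P \<ge> 1"
  shows "\<exists>s. \<alpha> s = cst s + tvar"
proof -
  define m where "m = degree P"
  define l where "l = lead_coeff P"
  define p1 where "p1 = coeff P (m - 1)"
  have Pnz: "P \<noteq> 0" using d by auto
  have lnz: "l \<noteq> 0" using Pnz l_def by simp
  have dm: "degree (map_poly cst P) = m" by (simp add: m_def cst.map_degree)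
  note G = coeff_shift_gen[of "map_poly cst P" tvar]
  have "\<alpha> p1 = coeff (map_poly \<alpha> P) (m - 1)" by (simp add: coeff_map_poly p1_def)
  also have "\<dots> = coeff (shift_pol P) (m - 1)" using E by simp
  also have "\<dots> = cst p1 + of_nat m * tvar * cst l"
    using G d dm unfolding shift_pol_def
    by (simp add: coeff_map_poly p1_def l_def lead_coeff_map_poly_nz cst.hinj m_def)
  finally have a1: "\<alpha> p1 = cst p1 + tvar * cst (of_nat m * l)"
    by (simp add: cst.hmult cst.hof_nat algebra_simps)
  have mnz: "(of_nat m :: 'a) \<noteq> 0" using d m_def by simp
  have Dnz: "cst (of_nat m * l) \<noteq> 0" using mnz lnz cst.hinj by fastforce
  have "\<alpha> l = coeff (map_poly \<alpha> P) m" by (simp add: coeff_map_poly l_def m_def)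
  also have "\<dots> = coeff (shift_pol P) m" using E by simp
  also have "\<dots> = cst l"
    using G dm unfolding shift_pol_def
    by (simp add: l_def coeff_map_poly m_def)
  finally have a2: "\<alpha> (of_nat m * l) = cst (of_nat m * l)"
    by (simp add: hmult hof_nat cst.hmult cst.hof_nat)
  define s where "s = p1 / (of_nat m * l)"
  have "\<alpha> s = (cst p1 + tvar * cst (of_nat m * l)) / cst (of_nat m * l)"
    by (simp add: s_def hdivide a1 a2)
  also have "\<dots> = cst s + tvar"
    using Dnz by (simp add: s_def cst.hdivide field_simps)
  finally show ?thesis by blast
qed

end


context gaction
begin

lemma slice_exists:
  assumes "\<exists>h. \<alpha> h \<noteq> cst h"
  shows "\<exists>s. \<alpha> s = cst s + tvar"
proof -
  obtain f where f: "\<alpha> f \<noteq> cst f" using assms by blast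
  obtain P Q a b where r: "\<alpha> f = Fract P Q" "Q \<noteq> 0" "lead_coeff Q = 1" "a * P + b * Q = 1"
    using bez_rep by blast
  from key[OF r] have E: "map_poly \<alpha> P = shift_pol P" "map_poly \<alpha> Q = shift_pol Q" by auto
  show ?thesis
  proof (cases "degree Q \<ge> 1")
    case True
    then show ?thesis using slice_from[OF E(2)] by blast
  next
    case False
    then have "degree Q = 0" by simp
    then obtain q0 where "Q = [:q0:]" by (elim degree_eq_zeroE)
    with r(3) have Q1: "Q = 1" by (simp add: one_pCons)
    show ?thesis
    proof (cases "degree P \<ge> 1")
      case True
      then show ?thesis using slice_from[OF E(1)] by blast
    next
      case False
      then have "degree P = 0" by simp
      then obtain c where Pc: "P = [:c:]" by (elim degree_eq_zeroE)
      from evalz[OF r(1,2,4)] Q1 Pc have "c = f" by simp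
      with r(1) Q1 Pc have "\<alpha> f = cst f" by (simp add: cst_def)
      with f show ?thesis by simp
    qed
  qed
qed

lemma inv_rep:
  assumes s: "\<alpha> s = cst s + tvar"
  shows "\<exists>P' Q'. (\<forall>i. coeff P' i \<in> invariants \<alpha>) \<and> (\<forall>i. coeff Q' i \<in> invariants \<alpha>) \<and>
           poly Q' s \<noteq> 0 \<and> h = poly P' s / poly Q' s"
proof -
  obtain P Q a b where r: "\<alpha> h = Fract P Q" "Q \<noteq> 0" "lead_coeff Q = 1" "a * P + b * Q = 1"
    using bez_rep by blast
  from key[OF r] have E: "map_poly \<alpha> P = shift_pol P" "map_poly \<alpha> Q = shift_pol Q" by auto
  from evalz[OF r(1,2,4)] have ev: "poly Q 0 \<noteq> 0" "poly P 0 = h * poly Q 0" by auto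
  have L: "map_poly \<alpha> [:-s, 1:] = [:- (cst s + tvar), 1:]"
    by (simp add: map_poly_pCons huminus hone s)
  have L2: "map_poly cst [:-s, 1:] = [:- cst s, 1:]"
    by (simp add: map_poly_pCons cst.huminus cst.hone)
  have C: "pcompose [:tvar, 1:] [:- (cst s + tvar), 1:] = [:- cst s, 1:]"
    by (simp add: pcompose_pCons)
  have inv: "\<forall>i. coeff (pcompose R [:-s, 1:]) i \<in> invariants \<alpha>"
    if ER: "map_poly \<alpha> R = shift_pol R" for R
  proof
    fix i
    have "map_poly \<alpha> (pcompose R [:-s, 1:]) = pcompose (shift_pol R) [:- (cst s + tvar), 1:]"
      by (simp add: map_pcompose ER L)
    also have "\<dots> = pcompose (map_poly cst R) [:- cst s, 1:]"
      by (simp only: shift_pol_def pcompose_assoc[symmetric] C)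
    also have "\<dots> = map_poly cst (pcompose R [:-s, 1:])"
      by (simp add: cst.map_pcompose L2)
    finally have "coeff (map_poly \<alpha> (pcompose R [:-s, 1:])) i = coeff (map_poly cst (pcompose R [:-s, 1:])) i"
      by simp
    then show "coeff (pcompose R [:-s, 1:]) i \<in> invariants \<alpha>"
      by (simp add: coeff_map_poly invariants_def)
  qed
  have ps: "poly (pcompose R [:-s, 1:]) s = poly R 0" for R
    by (simp add: poly_pcompose)
  show ?thesis
    using inv[OF E(1)] inv[OF E(2)] ps[of P] ps[of Q] ev
    by (intro exI[of _ "pcompose P [:-s, 1:]"] exI[of _ "pcompose Q [:-s, 1:]"]) simp
qed

lemma alpha_poly_inv:
  assumes s: "\<alpha> s = cst s + tvar" and c: "\<forall>i. coeff p i \<in> invariants \<alpha>"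
  shows "\<alpha> (poly p s) = Fract (pcompose p [:s, 1:]) 1"
proof -
  have "map_poly \<alpha> p = map_poly cst p"
    using c by (intro poly_eqI) (simp add: coeff_map_poly invariants_def)
  then show ?thesis by (simp add: hpoly s cst_tvar poly_cst_Fract)
qed

end

lemma poly_in_subfield:
  assumes F: "is_subfield F" and c: "\<forall>i. coeff p i \<in> F" and x: "x \<in> F"
  shows "poly p x \<in> F"
  using c
proof (induct p)
  case 0
  then show ?case using F by (simp add: is_subfield_def)
next
  case (pCons a p)
  have "a \<in> F" using pCons(3)[rule_format, of 0] by simp
  moreover have "\<forall>i. coeff p i \<in> F" using pCons(3)[rule_format, of "Suc i" for i] by simp
  then have "poly p x \<in> F" using pCons(2) by blast
  ultimately show ?case using F x by (simp add: is_subfield_def)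
qed

theorem mainTheorem2:
  fixes k :: "'a::field_char_0 set" and \<alpha> :: "'a \<Rightarrow> 'a poly fract"
  assumes "function_field_over k"
    and "rational_Ga_action k \<alpha>"
    and "\<exists>h. \<alpha> h \<noteq> cst h"
  shows "\<exists>s. \<not> algebraic_over (invariants \<alpha>) s \<and>
             \<alpha> s = cst s + tvar \<and>
             gen_field (invariants \<alpha> \<union> {s}) = UNIV \<and>
             (\<forall>p q. (\<forall>i. coeff p i \<in> invariants \<alpha>) \<longrightarrow> (\<forall>i. coeff q i \<in> invariants \<alpha>) \<longrightarrow>
                 poly q s \<noteq> 0 \<longrightarrow>
                 \<alpha> (poly p s / poly q s) = Fract (pcompose p [:s, 1:]) (pcompose q [:s, 1:]))"
proof -
  interpret gaction k \<alpha> by unfold_locales (rule assms(2))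
  obtain s where s: "\<alpha> s = cst s + tvar" using slice_exists[OF assms(3)] by blast
  have tr: "\<not> algebraic_over (invariants \<alpha>) s"
  proof
    assume "algebraic_over (invariants \<alpha>) s"
    then obtain p where p: "p \<noteq> 0" "\<forall>i. coeff p i \<in> invariants \<alpha>" "poly p s = 0"
      unfolding algebraic_over_def by blast
    have "Fract (pcompose p [:s, 1:]) 1 = 0" using alpha_poly_inv[OF s p(2)] p(3) by simp
    then have "pcompose p [:s, 1:] = 0" by (simp add: Zero_fract_def eq_fract)
    then have "p = 0" by (rule pcompose_eq_0) simp
    with p(1) show False by simp
  qed
  have gen: "gen_field (invariants \<alpha> \<union> {s}) = UNIV"
  proof (intro set_eqI iffI)
    fix h :: 'a
    obtain P' Q' where r: "\<forall>i. coeff P' i \<in> invariants \<alpha>" "\<forall>i. coeff Q' i \<in> invariants \<alpha>"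
      "poly Q' s \<noteq> 0" "h = poly P' s / poly Q' s"
      using inv_rep[OF s] by blast
    show "h \<in> gen_field (invariants \<alpha> \<union> {s})"
      unfolding gen_field_def
    proof (intro InterI, clarify)
      fix F assume F: "is_subfield F" "invariants \<alpha> \<union> {s} \<subseteq> F"
      have "poly P' s \<in> F" using poly_in_subfield[OF F(1)] r(1) F(2) by blast
      moreover have "poly Q' s \<in> F" using poly_in_subfield[OF F(1)] r(2) F(2) by blast
      ultimately show "h \<in> F" using F(1) r(4) by (simp add: is_subfield_def divide_inverse)
    qed
  qed simp
  have fm: "\<alpha> (poly p s / poly q s) = Fract (pcompose p [:s, 1:]) (pcompose q [:s, 1:])"
    if "\<forall>i. coeff p i \<in> invariants \<alpha>" "\<forall>i. coeff q i \<in> invariants \<alpha>" "poly q s \<noteq> 0" for p q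
    using that by (simp add: hdivide alpha_poly_inv[OF s])
  show ?thesis using tr s gen fm by blast
qed

end
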